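(* Under Assumptions 1-MP, 2-MP (a),(b),(c) and 3-MP, let $g\in\mathcal{G}\setminus\{\mathcal{T}+1\}$ and $1\le t_1\le t_2<g\le t_3\le t_4\le\mathcal{T}$, and let $d\in\mathcal{D}_+$. (1) If 4-MP(a) holds and $(a,b)\mapsto\overline{ATT}^{(t_3,t_4)}(g,a|g,b)$ is differentiable on $\mathcal{D}_+\times\mathcal{D}_+$, then $$\frac{\partial\,\mathbb{E}[\bar Y^{(t_3,t_4)}-\bar Y^{(t_1,t_2)}\mid G=g,D=d]}{\partial d}=\overline{ACRT}^{(t_3,t_4)}(g,d|g,d)+\frac{\partial\overline{ATT}^{(t_3,t_4)}(g,d|g,l)}{\partial l}\Big|_{l=d}.$$ (2) If 5-MP holds, then $\frac{\partial\,\mathbb{E}[\bar Y^{(t_3,t_4)}-\bar Y^{(t_1,t_2)}\mid G=g,D=d]}{\partial d}=\overline{ACR}^{(t_3,t_4)}(g,d)$.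
   Context: Multi-period setup. Periods $t=1,\dots,\mathcal{T}$. Each unit has a timing group $G\in\mathcal{G}\subseteq\{2,\dots,\mathcal{T}+1\}$ ($G=\mathcal{T}+1$ means never treated) and a dose $D\ge0$, with $D=0$ exactly for never-treated units and $D\in\mathcal{D}_+$ for units with $G\le\mathcal{T}$. Potential outcomes $Y_t(g,d)$; $Y_t(0):=Y_t(\mathcal{T}+1,0)$. $W_t:=D\mathbf{1}\{t\ge G\}$. Observed $Y_t=Y_t(0)\mathbf{1}\{t<G\}+Y_t(G,D)\mathbf{1}\{t\ge G\}$; finite means. 1-MP: i.i.d. sampling. 2-MP: (a) support of $D$ is $\{0\}\cup\mathcal{D}_+$, $\mathbb{P}(D=0)>0$, every $d\in\mathcal{D}_+$ in the support of $D\mid G=g$ for $g\le\mathcal{T}$; (b) $\mathcal{D}_+=[d_L,d_U]$, $0<d_L<d_U<\infty$; (c) $d\mapsto\mathbb{E}[\Delta Y_t\mid G=g,D=d]$ continuously differentiable on $\mathcal{D}_+$. 3-MP: (a) $Y_t(g,d)=Y_t(0)$ for $t<g$; (b) $W_1=0$, $W_{t-1}=d\Rightarrow W_t=d$. 4-MP(a): for all $g\in\mathcal{G}$, $t=2,\dots,\mathcal{T}$, $d\in\mathcal{D}$: $\mathbb{E}[Y_t(0)-Y_{t-1}(0)\mid G=g,D=d]=\mathbb{E}[Y_t(0)-Y_{t-1}(0)\mid D=0]$. 5-MP: for all $g\in\mathcal{G}$, $t=2,\dots,\mathcal{T}$, $d\in\mathcal{D}$: $\mathbb{E}[Y_t(g,d)-Y_{t-1}(0)\mid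 G=g,D=d]=\mathbb{E}[Y_t(g,d)-Y_{t-1}(0)\mid G=g]$ and $\mathbb{E}[Y_t(0)-Y_{t-1}(0)\mid G=g,D=d]=\mathbb{E}[Y_t(0)-Y_{t-1}(0)\mid D=0]$. Notation: $\bar Y^{(t_1,t_2)}:=\frac1{t_2-t_1+1}\sum_{t=t_1}^{t_2}Y_t$. $ATE(g,t,d):=\mathbb{E}[Y_t(g,d)-Y_t(0)\mid G=g]$; $\overline{ATE}^{(t_3,t_4)}(g,d):=\frac1{t_4-t_3+1}\sum_{t=t_3}^{t_4}ATE(g,t,d)$, $\overline{ACR}^{(t_3,t_4)}(g,d):=\partial\overline{ATE}^{(t_3,t_4)}(g,d)/\partial d$; $\overline{ATT}^{(t_3,t_4)}(g,a|g,b):=\mathbb{E}[\frac1{t_4-t_3+1}\sum_{t=t_3}^{t_4}(Y_t(g,a)-Y_t(0))\mid G=g,D=b]$; $\overline{ACRT}^{(t_3,t_4)}(g,d|g,d):=\partial\overline{ATT}^{(t_3,t_4)}(g,l|g,d)/\partial l|_{l=d}$. *)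

theory Defs
  imports "HOL-Probability.Probability"
begin

text \<open>Potential outcomes: Ypo t g d \<omega> = Y_t(g,d)(\<omega>); the untreated potential
  outcome is Y_t(0) = Ypo t (T+1) 0.  Timing group G, dose D.
  Conditional expectations given (G = g, D = d) (a null event for continuous D)
  are integrals against a regular conditional distribution kappa g d.\<close>

definition Y0 :: "nat \<Rightarrow> (nat \<Rightarrow> nat \<Rightarrow> real \<Rightarrow> 'a \<Rightarrow> real) \<Rightarrow> nat \<Rightarrow> 'a \<Rightarrow> real" where
  "Y0 T Ypo t = Ypo t (Suc T) 0"

definition Yobs :: "nat \<Rightarrow> (nat \<Rightarrow> nat \<Rightarrow> real \<Rightarrow> 'a \<Rightarrow> real) \<Rightarrow> ('a \<Rightarrow> nat) \<Rightarrow> ('a \<Rightarrow> real)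
    \<Rightarrow> nat \<Rightarrow> 'a \<Rightarrow> real" where
  "Yobs T Ypo G D t \<omega> = (if t < G \<omega> then Y0 T Ypo t \<omega> else Ypo t (G \<omega>) (D \<omega>) \<omega>)"

definition Wpath :: "('a \<Rightarrow> nat) \<Rightarrow> ('a \<Rightarrow> real) \<Rightarrow> nat \<Rightarrow> 'a \<Rightarrow> real" where
  "Wpath G D t \<omega> = (if G \<omega> \<le> t then D \<omega> else 0)"

definition tavg :: "nat \<Rightarrow> nat \<Rightarrow> (nat \<Rightarrow> real) \<Rightarrow> real" where
  "tavg t1 t2 f = (\<Sum>t = t1..t2. f t) / real (t2 - t1 + 1)"

definition condE_G :: "'a measure \<Rightarrow> ('a \<Rightarrow> nat) \<Rightarrow> nat \<Rightarrow> ('a \<Rightarrow> real) \<Rightarrow> real" where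
  "condE_G M G g X =
     (\<integral>\<omega>. X \<omega> * indicator {\<omega> \<in> space M. G \<omega> = g} \<omega> \<partial>M) / measure M {\<omega> \<in> space M. G \<omega> = g}"

definition condE_D0 :: "'a measure \<Rightarrow> ('a \<Rightarrow> real) \<Rightarrow> ('a \<Rightarrow> real) \<Rightarrow> real" where
  "condE_D0 M D X =
     (\<integral>\<omega>. X \<omega> * indicator {\<omega> \<in> space M. D \<omega> = 0} \<omega> \<partial>M) / measure M {\<omega> \<in> space M. D \<omega> = 0}"

definition condE_GD :: "(nat \<Rightarrow> real \<Rightarrow> 'a measure) \<Rightarrow> nat \<Rightarrow> real \<Rightarrow> ('a \<Rightarrow> real) \<Rightarrow> real" where
  "condE_GD \<kappa> g d X = (\<integral>\<omega>. X \<omega> \<partial>(\<kappa> g d))"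

definition is_cond_dist ::
  "'a measure \<Rightarrow> ('a \<Rightarrow> nat) \<Rightarrow> ('a \<Rightarrow> real) \<Rightarrow> real set \<Rightarrow> (nat \<Rightarrow> real \<Rightarrow> 'a measure) \<Rightarrow> nat \<Rightarrow> bool" where
  "is_cond_dist M G D Dp \<kappa> g \<longleftrightarrow>
     (\<forall>d\<in>Dp. prob_space (\<kappa> g d) \<and> sets (\<kappa> g d) = sets M \<and>
              (AE \<omega> in \<kappa> g d. G \<omega> = g \<and> D \<omega> = d)) \<and>
     (\<forall>A\<in>sets M. (\<lambda>d. emeasure (\<kappa> g d) A) \<in> borel_measurable borel) \<and>
     (\<forall>A\<in>sets M. \<forall>B\<in>sets borel.
        emeasure M (A \<inter> {\<omega> \<in> space M. G \<omega> = g \<and> D \<omega> \<in> B}) =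
        (\<integral>\<^sup>+\<omega>\<in>{\<omega> \<in> space M. G \<omega> = g \<and> D \<omega> \<in> B}. emeasure (\<kappa> g (D \<omega>)) A \<partial>M))"

definition C1_within :: "real set \<Rightarrow> (real \<Rightarrow> real) \<Rightarrow> bool" where
  "C1_within S f \<longleftrightarrow>
     (\<exists>f'. continuous_on S f' \<and> (\<forall>x\<in>S. (f has_real_derivative f' x) (at x within S)))"

definition PT4a ::
  "'a measure \<Rightarrow> nat \<Rightarrow> nat set \<Rightarrow> ('a \<Rightarrow> real) \<Rightarrow> real set
     \<Rightarrow> (nat \<Rightarrow> nat \<Rightarrow> real \<Rightarrow> 'a \<Rightarrow> real) \<Rightarrow> (nat \<Rightarrow> real \<Rightarrow> 'a measure) \<Rightarrow> bool" where
  "PT4a M T Gs D Dp Ypo \<kappa> \<longleftrightarrow>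
     (\<forall>g\<in>Gs. g \<le> T \<longrightarrow> (\<forall>t\<in>{2..T}. \<forall>d\<in>Dp.
        condE_GD \<kappa> g d (\<lambda>\<omega>. Y0 T Ypo t \<omega> - Y0 T Ypo (t - 1) \<omega>)
        = condE_D0 M D (\<lambda>\<omega>. Y0 T Ypo t \<omega> - Y0 T Ypo (t - 1) \<omega>)))"

definition PT5 ::
  "'a measure \<Rightarrow> nat \<Rightarrow> nat set \<Rightarrow> ('a \<Rightarrow> nat) \<Rightarrow> ('a \<Rightarrow> real) \<Rightarrow> real set
     \<Rightarrow> (nat \<Rightarrow> nat \<Rightarrow> real \<Rightarrow> 'a \<Rightarrow> real) \<Rightarrow> (nat \<Rightarrow> real \<Rightarrow> 'a measure) \<Rightarrow> bool" where
  "PT5 M T Gs G D Dp Ypo \<kappa> \<longleftrightarrow>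
     (\<forall>g\<in>Gs. g \<le> T \<longrightarrow> (\<forall>t\<in>{2..T}. \<forall>d\<in>Dp.
        condE_GD \<kappa> g d (\<lambda>\<omega>. Ypo t g d \<omega> - Y0 T Ypo (t - 1) \<omega>)
        = condE_G M G g (\<lambda>\<omega>. Ypo t g d \<omega> - Y0 T Ypo (t - 1) \<omega>))) \<and>
     PT4a M T Gs D Dp Ypo \<kappa>"

definition ATTbar ::
  "nat \<Rightarrow> (nat \<Rightarrow> nat \<Rightarrow> real \<Rightarrow> 'a \<Rightarrow> real) \<Rightarrow> (nat \<Rightarrow> real \<Rightarrow> 'a measure)
     \<Rightarrow> nat \<Rightarrow> nat \<Rightarrow> nat \<Rightarrow> real \<Rightarrow> real \<Rightarrow> real" where
  "ATTbar T Ypo \<kappa> t3 t4 g a b =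
     condE_GD \<kappa> g b (\<lambda>\<omega>. tavg t3 t4 (\<lambda>t. Ypo t g a \<omega> - Y0 T Ypo t \<omega>))"

definition ATEbar ::
  "'a measure \<Rightarrow> nat \<Rightarrow> ('a \<Rightarrow> nat) \<Rightarrow> (nat \<Rightarrow> nat \<Rightarrow> real \<Rightarrow> 'a \<Rightarrow> real)
     \<Rightarrow> nat \<Rightarrow> nat \<Rightarrow> nat \<Rightarrow> real \<Rightarrow> real" where
  "ATEbar M T G Ypo t3 t4 g d =
     tavg t3 t4 (\<lambda>t. condE_G M G g (\<lambda>\<omega>. Ypo t g d \<omega> - Y0 T Ypo t \<omega>))"

end

theory Submission
  imports Defs
begin
lemma tavg_cong: "(\<And>t. t \<in> {a..b} \<Longrightarrow> f t = h t) \<Longrightarrow> tavg a b f = tavg a b h"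
  unfolding tavg_def by (metis sum.cong)
lemma tavg_diff: "tavg a b (\<lambda>t. f t - h t) = tavg a b f - tavg a b h"
  unfolding tavg_def by (simp add: sum_subtractf diff_divide_distrib)
lemma tavg_add: "tavg a b (\<lambda>t. f t + h t) = tavg a b f + tavg a b h"
  unfolding tavg_def by (simp add: sum.distrib add_divide_distrib)
lemma tavg_const: "a \<le> b \<Longrightarrow> tavg a b (\<lambda>t. k) = k"
  proof -
  assume "a \<le> b"
  then have "real (b - a + 1) > 0" by simp
  moreover have "Suc b - a = b - a + 1" using \<open>a \<le> b\<close> by simp
  ultimately show ?thesis unfolding tavg_def by simp
qed
lemma tavg_deriv:
  assumes "\<And>t. t \<in> {a..b} \<Longrightarrow> ((\<lambda>x. f x t) has_real_derivative f' t) (at z within S)"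
  shows "((\<lambda>x. tavg a b (f x)) has_real_derivative tavg a b f') (at z within S)"
  unfolding tavg_def by (intro DERIV_cdivide DERIV_sum assms)
lemma integral_tavg:
  assumes "\<And>t. t \<in> {a..b} \<Longrightarrow> integrable N (f t)"
  shows "(\<integral>\<omega>. tavg a b (\<lambda>t. f t \<omega>) \<partial>N) = tavg a b (\<lambda>t. \<integral>\<omega>. f t \<omega> \<partial>N)"
  unfolding tavg_def by (simp add: integral_sum assms)
lemma integrable_tavg:
  assumes "\<And>t. t \<in> {a..b} \<Longrightarrow> integrable N (f t)"
  shows "integrable N (\<lambda>\<omega>. tavg a b (\<lambda>t. f t \<omega>))"
proof -
  have "integrable N (\<lambda>\<omega>. \<Sum>t\<in>{a..b}. f t \<omega>)" by (rule Bochner_Integration.integrable_sum) (rule assms)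
  then show ?thesis unfolding tavg_def by simp
qed
lemma diag_deriv:
  fixes A :: "real \<Rightarrow> real \<Rightarrow> real"
  assumes dif: "(\<lambda>(a,b). A a b) differentiable (at (d,d) within S \<times> S)" and dS: "d \<in> S"
  shows "\<exists>La Lb. ((\<lambda>l. A l d) has_real_derivative La) (at d within S) \<and>
     ((\<lambda>l. A d l) has_real_derivative Lb) (at d within S) \<and>
     ((\<lambda>x. A x x) has_real_derivative (La+Lb)) (at d within S)"
proof -
  obtain f' where D: "((\<lambda>(a,b). A a b) has_derivative f') (at (d,d) within S \<times> S)"
    using dif unfolding differentiable_def by blast
  have lin: "linear f'" using D by (rule has_derivative_linear)
  have sc: "f' (h *\<^sub>R v) = h * f' v" for h v using linear_scale[OF lin] by simp
  have comp: "((\<lambda>x. (\<lambda>(a,b). A a b) (\<phi> x)) has_derivative (\<lambda>h. f' (\<phi>' h))) (at d within S)"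
    if "(\<phi> has_derivative \<phi>') (at d within S)" "\<phi> d = (d,d)" "\<phi> ` S \<subseteq> S \<times> S" for \<phi> \<phi>'
    apply (rule has_derivative_in_compose[OF that(1)])
    using has_derivative_subset[OF D that(3)] that(2) by simp
  have d1: "((\<lambda>x. (x, d)) has_derivative (\<lambda>h. (h, 0))) (at d within S)"
    by (intro has_derivative_Pair has_derivative_ident has_derivative_const)
  have d2: "((\<lambda>x. (d, x)) has_derivative (\<lambda>h. (0, h))) (at d within S)"
    by (intro has_derivative_Pair has_derivative_ident has_derivative_const)
  have d3: "((\<lambda>x. (x, x)) has_derivative (\<lambda>h. (h, h))) (at d within S)"
    by (intro has_derivative_Pair has_derivative_ident)
  have e1: "(\<lambda>h. f' (h, 0)) = (*) (f' (1,0))"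
  proof
    fix h :: real have "(h, 0::real) = h *\<^sub>R (1,0)" by simp
    then show "f' (h, 0) = f' (1,0) * h" using sc by (metis mult.commute)
  qed
  have e2: "(\<lambda>h. f' (0, h)) = (*) (f' (0,1))"
  proof
    fix h :: real have "(0::real, h) = h *\<^sub>R (0,1)" by simp
    then show "f' (0, h) = f' (0,1) * h" using sc by (metis mult.commute)
  qed
  have e3: "(\<lambda>h. f' (h, h)) = (*) (f' (1,0) + f' (0,1))"
  proof
    fix h :: real have "(h, h) = (h, 0) + (0, h)" by simp
    then have "f' (h,h) = f' (h,0) + f' (0,h)" using linear_add[OF lin, of "(h,0)" "(0,h)"] by simp
    then show "f' (h, h) = (f' (1,0) + f' (0,1)) * h" using e1 e2
      by (metis distrib_right mult.commute)
  qed
  have "((\<lambda>l. A l d) has_real_derivative f' (1,0)) (at d within S)"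
    unfolding has_field_derivative_def using comp[OF d1] dS e1 by auto
  moreover have "((\<lambda>l. A d l) has_real_derivative f' (0,1)) (at d within S)"
    unfolding has_field_derivative_def using comp[OF d2] dS e2 by auto
  moreover have "((\<lambda>l. A l l) has_real_derivative f' (1,0) + f' (0,1)) (at d within S)"
    unfolding has_field_derivative_def using comp[OF d3] dS e3 by auto
  ultimately show ?thesis by blast
qed
lemma condE_G_diff:
  assumes Gm: "G \<in> measurable M (count_space UNIV)" and f: "integrable M f" and h: "integrable M h"
  shows "condE_G M G g (\<lambda>\<omega>. f \<omega> - h \<omega>) = condE_G M G g f - condE_G M G g h"
proof -
  have eq: "{\<omega>\<in>space M. G \<omega> = g} = G -` {g} \<inter> space M" by auto
  have A: "{\<omega>\<in>space M. G \<omega> = g} \<in> sets M" unfolding eq by (rule measurable_sets[OF Gm]) simp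
  have i1: "integrable M (\<lambda>x. f x * indicator {\<omega>\<in>space M. G \<omega> = g} x)"
    by (rule integrable_real_mult_indicator[OF A f])
  have i2: "integrable M (\<lambda>x. h x * indicator {\<omega>\<in>space M. G \<omega> = g} x)"
    by (rule integrable_real_mult_indicator[OF A h])
  have "(\<lambda>\<omega>. (f \<omega> - h \<omega>) * indicator {\<omega>\<in>space M. G \<omega> = g} \<omega>) =
        (\<lambda>\<omega>. f \<omega> * indicator {\<omega>\<in>space M. G \<omega> = g} \<omega> - h \<omega> * indicator {\<omega>\<in>space M. G \<omega> = g} \<omega>)"
    by (simp add: left_diff_distrib)
  then show ?thesis unfolding condE_G_def
    using Bochner_Integration.integral_diff[OF i1 i2] by (simp add: diff_divide_distrib)
qed

theorem lemma11:
  fixes M :: "'a measure" and T :: nat and Gs :: "nat set"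
    and G :: "'a \<Rightarrow> nat" and D :: "'a \<Rightarrow> real" and dL dU :: real
    and Ypo :: "nat \<Rightarrow> nat \<Rightarrow> real \<Rightarrow> 'a \<Rightarrow> real"
    and \<kappa> :: "nat \<Rightarrow> real \<Rightarrow> 'a measure"
    and g t1 t2 t3 t4 :: nat and d :: real
  assumes prob: "prob_space M"
    and Gs_sub: "Gs \<subseteq> {2..Suc T}"
    and G_meas: "G \<in> measurable M (count_space UNIV)"
    and D_meas: "D \<in> borel_measurable M"
    and G_in: "\<forall>\<omega>\<in>space M. G \<omega> \<in> Gs"
    \<comment> \<open>D = 0 exactly for never-treated units, D in D+ for treated ones\<close>
    and D_zero: "\<forall>\<omega>\<in>space M. D \<omega> = 0 \<longleftrightarrow> G \<omega> = Suc T"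
    and D_pos: "\<forall>\<omega>\<in>space M. G \<omega> \<le> T \<longrightarrow> D \<omega> \<in> {dL..dU}"
    \<comment> \<open>finite means (unconditional and conditional), observed outcomes are random variables\<close>
    and integ: "\<forall>t\<in>{1..T}. \<forall>g'\<in>Gs. \<forall>d'\<in>insert 0 {dL..dU}. integrable M (Ypo t g' d')"
    and integ_c: "\<forall>g'\<in>Gs. g' \<le> T \<longrightarrow> (\<forall>d'\<in>{dL..dU}. \<forall>t\<in>{1..T}. \<forall>g''\<in>Gs.
                     \<forall>d''\<in>insert 0 {dL..dU}. integrable (\<kappa> g' d') (Ypo t g'' d''))"
    and Yobs_meas: "\<forall>t\<in>{1..T}. Yobs T Ypo G D t \<in> borel_measurable M"
    \<comment> \<open>kappa is the conditional distribution given (G,D)\<close>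
    and cond: "\<forall>g'\<in>Gs. g' \<le> T \<longrightarrow> is_cond_dist M G D {dL..dU} \<kappa> g'"
    \<comment> \<open>2-MP (a)\<close>
    and P_D0: "measure M {\<omega>\<in>space M. D \<omega> = 0} > 0"
    and supp: "\<forall>g'\<in>Gs. g' \<le> T \<longrightarrow> (\<forall>d'\<in>{dL..dU}. \<forall>\<epsilon>>0.
                 measure M {\<omega>\<in>space M. G \<omega> = g' \<and> \<bar>D \<omega> - d'\<bar> < \<epsilon>} > 0)"
    \<comment> \<open>2-MP (b)\<close>
    and dLU: "0 < dL" "dL < dU"
    \<comment> \<open>2-MP (c)\<close>
    and C1: "\<forall>g'\<in>Gs. g' \<le> T \<longrightarrow> (\<forall>t\<in>{2..T}. C1_within {dL..dU}
               (\<lambda>x. condE_GD \<kappa> g' x (\<lambda>\<omega>. Yobs T Ypo G D t \<omega> - Yobs T Ypo G D (t - 1) \<omega>)))"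
    \<comment> \<open>3-MP (a): no anticipation\<close>
    and noant: "\<forall>g'\<in>Gs. \<forall>d'\<in>insert 0 {dL..dU}. \<forall>t. t < g' \<longrightarrow>
                  (\<forall>\<omega>\<in>space M. Ypo t g' d' \<omega> = Y0 T Ypo t \<omega>)"
    \<comment> \<open>3-MP (b): staggered adoption\<close>
    and stag: "\<forall>\<omega>\<in>space M. Wpath G D 1 \<omega> = 0 \<and>
                 (\<forall>t\<in>{2..T}. Wpath G D (t - 1) \<omega> = D \<omega> \<longrightarrow> Wpath G D t \<omega> = D \<omega>)"
    \<comment> \<open>the group and periods\<close>
    and g_in: "g \<in> Gs" "g \<noteq> Suc T"
    and times: "1 \<le> t1" "t1 \<le> t2" "t2 < g" "g \<le> t3" "t3 \<le> t4" "t4 \<le> T"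
    and d_in: "d \<in> {dL..dU}"
  shows
    "(PT4a M T Gs D {dL..dU} Ypo \<kappa> \<and>
      (\<forall>p\<in>{dL..dU} \<times> {dL..dU}.
         (\<lambda>(a, b). ATTbar T Ypo \<kappa> t3 t4 g a b) differentiable (at p within {dL..dU} \<times> {dL..dU}))
      \<longrightarrow> (\<exists>La Lb.
            ((\<lambda>l. ATTbar T Ypo \<kappa> t3 t4 g l d) has_real_derivative La) (at d within {dL..dU}) \<and>
            ((\<lambda>l. ATTbar T Ypo \<kappa> t3 t4 g d l) has_real_derivative Lb) (at d within {dL..dU}) \<and>
            ((\<lambda>x. condE_GD \<kappa> g x (\<lambda>\<omega>. tavg t3 t4 (\<lambda>t. Yobs T Ypo G D t \<omega>)
                                       - tavg t1 t2 (\<lambda>t. Yobs T Ypo G D t \<omega>)))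
               has_real_derivative (La + Lb)) (at d within {dL..dU})))
     \<and>
     (PT5 M T Gs G D {dL..dU} Ypo \<kappa>
      \<longrightarrow> (\<exists>L.
            ((\<lambda>x. ATEbar M T G Ypo t3 t4 g x) has_real_derivative L) (at d within {dL..dU}) \<and>
            ((\<lambda>x. condE_GD \<kappa> g x (\<lambda>\<omega>. tavg t3 t4 (\<lambda>t. Yobs T Ypo G D t \<omega>)
                                       - tavg t1 t2 (\<lambda>t. Yobs T Ypo G D t \<omega>)))
               has_real_derivative L) (at d within {dL..dU})))"
proof -
  define S where "S = {dL..dU}"
  have dS: "d \<in> S" using d_in S_def by simp
  have gT: "g \<le> T" using g_in Gs_sub by auto
  have g2: "2 \<le> g" using g_in Gs_sub by auto
  have "{\<omega>\<in>space M. D \<omega> = 0} \<noteq> {}"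
  proof
    assume "{\<omega>\<in>space M. D \<omega> = 0} = {}"
    then have "measure M {\<omega>\<in>space M. D \<omega> = 0} = 0" by (metis measure_empty)
    then show False using P_D0 by linarith
  qed
  then obtain \<omega>0 where "\<omega>0 \<in> space M" "D \<omega>0 = 0" by auto
  then have SucT: "Suc T \<in> Gs" using D_zero G_in by metis
  have condg: "is_cond_dist M G D S \<kappa> g" using cond g_in gT S_def by auto
  have kps: "prob_space (\<kappa> g x)" and ksets: "sets (\<kappa> g x) = sets M"
    and kae: "AE \<omega> in \<kappa> g x. G \<omega> = g \<and> D \<omega> = x" if "x \<in> S" for x
    using condg that unfolding is_cond_dist_def by auto
  have kspace: "space (\<kappa> g x) = space M" if "x \<in> S" for x
    using ksets[OF that] by (rule sets_eq_imp_space_eq)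
  have intk: "integrable (\<kappa> g x) (Ypo t g' d')"
    if "x \<in> S" "t \<in> {1..T}" "g' \<in> Gs" "d' \<in> insert 0 S" for x t g' d'
    using integ_c g_in gT that S_def by auto
  have intkY: "integrable (\<kappa> g x) (Ypo t g x)" if "x \<in> S" "t \<in> {1..T}" for x t
    using intk[OF that g_in(1)] that by auto
  have intk0: "integrable (\<kappa> g x) (Y0 T Ypo t)" if "x \<in> S" "t \<in> {1..T}" for x t
    unfolding Y0_def using intk[OF that SucT] by auto
  have intM: "integrable M (Ypo t g' d')"
    if "t \<in> {1..T}" "g' \<in> Gs" "d' \<in> insert 0 S" for t g' d'
    using integ that S_def by auto
  have intM0: "integrable M (Y0 T Ypo t)" if "t \<in> {1..T}" for t
    unfolding Y0_def using intM[OF that SucT] by auto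
  have meask: "Yobs T Ypo G D t \<in> borel_measurable (\<kappa> g x)" if "x \<in> S" "t \<in> {1..T}" for x t
  proof -
    have "Yobs T Ypo G D t \<in> borel_measurable M" using Yobs_meas that by auto
    then show ?thesis unfolding measurable_cong_sets[OF ksets[OF that(1)] refl, of borel] .
  qed
  have aeY: "AE \<omega> in \<kappa> g x. \<forall>t\<in>{1..T}. Yobs T Ypo G D t \<omega> = Ypo t g x \<omega>" if "x \<in> S" for x
    using kae[OF that] AE_space
  proof eventually_elim
    case (elim \<omega>)
    then have \<omega>: "\<omega> \<in> space M" "G \<omega> = g" "D \<omega> = x" using kspace[OF that] by auto
    show ?case
    proof
      fix t assume "t \<in> {1..T}"
      show "Yobs T Ypo G D t \<omega> = Ypo t g x \<omega>"
      proof (cases "t < g")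
        case True
        have "x \<in> insert 0 {dL..dU}" using that S_def by simp
        then have "Ypo t g x \<omega> = Y0 T Ypo t \<omega>"
          using noant g_in(1) True \<omega>(1) by blast
        then show ?thesis using \<omega>(2) True unfolding Yobs_def by simp
      next
        case False
        then show ?thesis using \<omega> unfolding Yobs_def by simp
      qed
    qed
  qed
  define p where "p = (\<lambda>x t. \<integral>\<omega>. Ypo t g x \<omega> \<partial>(\<kappa> g x))"
  define e where "e = (\<lambda>x t. \<integral>\<omega>. Y0 T Ypo t \<omega> \<partial>(\<kappa> g x))"
  define F where "F = (\<lambda>x. condE_GD \<kappa> g x (\<lambda>\<omega>. tavg t3 t4 (\<lambda>t. Yobs T Ypo G D t \<omega>)
                                       - tavg t1 t2 (\<lambda>t. Yobs T Ypo G D t \<omega>)))"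
  have sub34: "{t3..t4} \<subseteq> {1..T}" and sub12: "{t1..t2} \<subseteq> {1..T}" using times by auto
  have F_eq: "F x = tavg t3 t4 (p x) - tavg t1 t2 (p x)" if "x \<in> S" for x
  proof -
    have i1: "integrable (\<kappa> g x) (\<lambda>\<omega>. tavg t3 t4 (\<lambda>t. Ypo t g x \<omega>))"
      by (rule integrable_tavg, rule intkY[OF that]) (use sub34 in blast)
    have i2: "integrable (\<kappa> g x) (\<lambda>\<omega>. tavg t1 t2 (\<lambda>t. Ypo t g x \<omega>))"
      by (rule integrable_tavg, rule intkY[OF that]) (use sub12 in blast)
    have j1: "(\<integral>\<omega>. tavg t3 t4 (\<lambda>t. Ypo t g x \<omega>) \<partial>(\<kappa> g x)) = tavg t3 t4 (p x)"
      unfolding p_def by (rule integral_tavg, rule intkY[OF that]) (use sub34 in blast)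
    have j2: "(\<integral>\<omega>. tavg t1 t2 (\<lambda>t. Ypo t g x \<omega>) \<partial>(\<kappa> g x)) = tavg t1 t2 (p x)"
      unfolding p_def by (rule integral_tavg, rule intkY[OF that]) (use sub12 in blast)
    have m1: "(\<lambda>\<omega>. tavg t3 t4 (\<lambda>t. Yobs T Ypo G D t \<omega>) - tavg t1 t2 (\<lambda>t. Yobs T Ypo G D t \<omega>))
             \<in> borel_measurable (\<kappa> g x)"
      unfolding tavg_def using meask[OF that] sub34 sub12
      by (intro borel_measurable_diff borel_measurable_divide borel_measurable_sum) auto
    have m2: "(\<lambda>\<omega>. tavg t3 t4 (\<lambda>t. Ypo t g x \<omega>) - tavg t1 t2 (\<lambda>t. Ypo t g x \<omega>))
             \<in> borel_measurable (\<kappa> g x)"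
      using Bochner_Integration.integrable_diff[OF i1 i2] by (rule borel_measurable_integrable)
    have ae: "AE \<omega> in \<kappa> g x. tavg t3 t4 (\<lambda>t. Yobs T Ypo G D t \<omega>) - tavg t1 t2 (\<lambda>t. Yobs T Ypo G D t \<omega>)
              = tavg t3 t4 (\<lambda>t. Ypo t g x \<omega>) - tavg t1 t2 (\<lambda>t. Ypo t g x \<omega>)"
      using aeY[OF that]
    proof eventually_elim
      case (elim \<omega>)
      have "tavg t3 t4 (\<lambda>t. Yobs T Ypo G D t \<omega>) = tavg t3 t4 (\<lambda>t. Ypo t g x \<omega>)"
        by (rule tavg_cong) (use elim sub34 in blast)
      moreover have "tavg t1 t2 (\<lambda>t. Yobs T Ypo G D t \<omega>) = tavg t1 t2 (\<lambda>t. Ypo t g x \<omega>)"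
        by (rule tavg_cong) (use elim sub12 in blast)
      ultimately show ?case by simp
    qed
    have "F x = (\<integral>\<omega>. tavg t3 t4 (\<lambda>t. Ypo t g x \<omega>) - tavg t1 t2 (\<lambda>t. Ypo t g x \<omega>) \<partial>(\<kappa> g x))"
      unfolding F_def condE_GD_def by (rule integral_cong_AE[OF m1 m2 ae])
    also have "\<dots> = tavg t3 t4 (p x) - tavg t1 t2 (p x)"
      using Bochner_Integration.integral_diff[OF i1 i2] j1 j2 by simp
    finally show ?thesis .
  qed
  have pe: "p x t = e x t" if "x \<in> S" "t < g" for x t
    unfolding p_def e_def
  proof (rule Bochner_Integration.integral_cong[OF refl])
    fix \<omega> assume "\<omega> \<in> space (\<kappa> g x)"
    then have \<omega>: "\<omega> \<in> space M" using kspace[OF that(1)] by simp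
    have "x \<in> insert 0 {dL..dU}" using that S_def by simp
    then show "Ypo t g x \<omega> = Y0 T Ypo t \<omega>" using noant g_in(1) that(2) \<omega> by blast
  qed
  define h where "h = (\<lambda>s x. condE_GD \<kappa> g x (\<lambda>\<omega>. Yobs T Ypo G D s \<omega> - Yobs T Ypo G D (s - 1) \<omega>))"
  have h_eq: "h s x = p x s - p x (s - 1)" if "x \<in> S" "s \<in> {2..T}" for s x
  proof -
    have s1: "s \<in> {1..T}" "s - 1 \<in> {1..T}" using that by auto
    have i1: "integrable (\<kappa> g x) (Ypo s g x)" by (rule intkY[OF that(1) s1(1)])
    have i2: "integrable (\<kappa> g x) (Ypo (s - 1) g x)" by (rule intkY[OF that(1) s1(2)])
    have m1: "(\<lambda>\<omega>. Yobs T Ypo G D s \<omega> - Yobs T Ypo G D (s - 1) \<omega>) \<in> borel_measurable (\<kappa> g x)"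
      by (intro borel_measurable_diff meask[OF that(1)] s1)
    have m2: "(\<lambda>\<omega>. Ypo s g x \<omega> - Ypo (s - 1) g x \<omega>) \<in> borel_measurable (\<kappa> g x)"
      using Bochner_Integration.integrable_diff[OF i1 i2] by (rule borel_measurable_integrable)
    have ae: "AE \<omega> in \<kappa> g x. Yobs T Ypo G D s \<omega> - Yobs T Ypo G D (s - 1) \<omega> = Ypo s g x \<omega> - Ypo (s - 1) g x \<omega>"
      using aeY[OF that(1)] by eventually_elim (use s1 in simp)
    have "h s x = (\<integral>\<omega>. Ypo s g x \<omega> - Ypo (s - 1) g x \<omega> \<partial>(\<kappa> g x))"
      unfolding h_def condE_GD_def by (rule integral_cong_AE[OF m1 m2 ae])
    also have "\<dots> = p x s - p x (s - 1)"
      unfolding p_def using Bochner_Integration.integral_diff[OF i1 i2] by simp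
    finally show ?thesis .
  qed
  have p_tel: "p x t = p x 1 + (\<Sum>s=2..t. h s x)" if "x \<in> S" "t \<in> {1..T}" for x t
  proof -
    have "1 \<le> t \<longrightarrow> t \<le> T \<longrightarrow> p x t = p x 1 + (\<Sum>s=2..t. h s x)"
    proof (induction t)
      case 0 then show ?case by simp
    next
      case (Suc n)
      show ?case
      proof (cases "n = 0")
        case True then show ?thesis by simp
      next
        case False
        show ?thesis
        proof (intro impI)
          assume "1 \<le> Suc n" "Suc n \<le> T"
          then have IH: "p x n = p x 1 + (\<Sum>s=2..n. h s x)" using Suc.IH False by simp
          have "h (Suc n) x = p x (Suc n) - p x n" using h_eq[OF that(1), of "Suc n"] False \<open>Suc n \<le> T\<close> by simp
          moreover have "(\<Sum>s=2..Suc n. h s x) = (\<Sum>s=2..n. h s x) + h (Suc n) x"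
            using False by (simp add: sum.cl_ivl_Suc)
          ultimately show "p x (Suc n) = p x 1 + (\<Sum>s=2..Suc n. h s x)" using IH by simp
        qed
      qed
    qed
    then show ?thesis using that by simp
  qed
  have "\<forall>s\<in>{2..T}. \<exists>L. (h s has_real_derivative L) (at d within S)"
  proof
    fix s assume s: "s \<in> {2..T}"
    have "C1_within S (h s)" using C1 g_in(1) gT s unfolding S_def h_def by blast
    then show "\<exists>L. (h s has_real_derivative L) (at d within S)"
      unfolding C1_within_def using dS by blast
  qed
  then obtain hd where hd: "\<And>s. s \<in> {2..T} \<Longrightarrow> (h s has_real_derivative hd s) (at d within S)"
    by metis
  define Phi where "Phi = (\<lambda>x. tavg t3 t4 (\<lambda>t. \<Sum>s=2..t. h s x) - tavg t1 t2 (\<lambda>t. \<Sum>s=2..t. h s x))"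
  define Phi' where "Phi' = tavg t3 t4 (\<lambda>t. \<Sum>s=2..t. hd s) - tavg t1 t2 (\<lambda>t. \<Sum>s=2..t. hd s)"
  have Phi_deriv: "(Phi has_real_derivative Phi') (at d within S)"
    unfolding Phi_def Phi'_def
  proof (intro DERIV_diff tavg_deriv DERIV_sum)
    fix t s assume "t \<in> {t3..t4}" "s \<in> {2..t}"
    then have "s \<in> {2..T}" using times by auto
    then show "((\<lambda>x. h s x) has_real_derivative hd s) (at d within S)" using hd by simp
  next
    fix t s assume "t \<in> {t1..t2}" "s \<in> {2..t}"
    then have "s \<in> {2..T}" using times by auto
    then show "((\<lambda>x. h s x) has_real_derivative hd s) (at d within S)" using hd by simp
  qed
  have F_Phi: "F x = Phi x" if "x \<in> S" for x
  proof -
    have "tavg t3 t4 (p x) = tavg t3 t4 (\<lambda>t. p x 1 + (\<Sum>s=2..t. h s x))"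
      by (rule tavg_cong) (use p_tel[OF that] sub34 in blast)
    also have "\<dots> = p x 1 + tavg t3 t4 (\<lambda>t. \<Sum>s=2..t. h s x)"
      using times by (simp add: tavg_add tavg_const)
    finally have a: "tavg t3 t4 (p x) = \<dots>" .
    have "tavg t1 t2 (p x) = tavg t1 t2 (\<lambda>t. p x 1 + (\<Sum>s=2..t. h s x))"
      by (rule tavg_cong) (use p_tel[OF that] sub12 in blast)
    also have "\<dots> = p x 1 + tavg t1 t2 (\<lambda>t. \<Sum>s=2..t. h s x)"
      using times by (simp add: tavg_add tavg_const)
    finally have b: "tavg t1 t2 (p x) = \<dots>" .
    show ?thesis using F_eq[OF that] a b unfolding Phi_def by simp
  qed
  define C where "C = (\<lambda>t. e d t - e d 1)"
  have e_tel: "e x t = e x 1 + C t"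
    if PT4: "PT4a M T Gs D {dL..dU} Ypo \<kappa>" and x: "x \<in> S" and t: "t \<in> {1..T}" for x t
  proof -
    have step: "e y s - e y (s - 1) = condE_D0 M D (\<lambda>\<omega>. Y0 T Ypo s \<omega> - Y0 T Ypo (s - 1) \<omega>)"
      if y: "y \<in> S" and s: "s \<in> {2..T}" for y s
    proof -
      have s1: "s \<in> {1..T}" "s - 1 \<in> {1..T}" using s by auto
      have "condE_GD \<kappa> g y (\<lambda>\<omega>. Y0 T Ypo s \<omega> - Y0 T Ypo (s - 1) \<omega>)
            = condE_D0 M D (\<lambda>\<omega>. Y0 T Ypo s \<omega> - Y0 T Ypo (s - 1) \<omega>)"
        using PT4 g_in(1) gT s y unfolding PT4a_def S_def by blast
      moreover have "condE_GD \<kappa> g y (\<lambda>\<omega>. Y0 T Ypo s \<omega> - Y0 T Ypo (s - 1) \<omega>) = e y s - e y (s - 1)"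
        unfolding condE_GD_def e_def
        using Bochner_Integration.integral_diff[OF intk0[OF y s1(1)] intk0[OF y s1(2)]] by simp
      ultimately show ?thesis by simp
    qed
    have "1 \<le> t \<longrightarrow> t \<le> T \<longrightarrow> e x t - e x 1 = e d t - e d 1"
    proof (induction t)
      case 0 then show ?case by simp
    next
      case (Suc n)
      show ?case
      proof (cases "n = 0")
        case True then show ?thesis by simp
      next
        case False
        show ?thesis
        proof (intro impI)
          assume "1 \<le> Suc n" "Suc n \<le> T"
          then have IH: "e x n - e x 1 = e d n - e d 1" using Suc.IH False by simp
          have "Suc n \<in> {2..T}" using False \<open>Suc n \<le> T\<close> by simp
          from step[OF x this] step[OF dS this] IH
          show "e x (Suc n) - e x 1 = e d (Suc n) - e d 1" by simp
        qed
      qed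
    qed
    then show ?thesis using t unfolding C_def by simp
  qed
  have F_e: "F x = tavg t3 t4 (p x) - e x 1 - tavg t1 t2 C"
    if PT4: "PT4a M T Gs D {dL..dU} Ypo \<kappa>" and x: "x \<in> S" for x
  proof -
    have "tavg t1 t2 (p x) = tavg t1 t2 (\<lambda>t. e x 1 + C t)"
    proof (rule tavg_cong)
      fix t assume "t \<in> {t1..t2}"
      then have tt: "t < g" "t \<in> {1..T}" using times by auto
      show "p x t = e x 1 + C t" using pe[OF x tt(1)] e_tel[OF PT4 x tt(2)] by simp
    qed
    also have "\<dots> = e x 1 + tavg t1 t2 C" using times by (simp add: tavg_add tavg_const)
    finally show ?thesis using F_eq[OF x] by simp
  qed
  have part1: "PT4a M T Gs D {dL..dU} Ypo \<kappa> \<and>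
      (\<forall>p\<in>{dL..dU} \<times> {dL..dU}.
         (\<lambda>(a, b). ATTbar T Ypo \<kappa> t3 t4 g a b) differentiable (at p within {dL..dU} \<times> {dL..dU}))
      \<longrightarrow> (\<exists>La Lb.
            ((\<lambda>l. ATTbar T Ypo \<kappa> t3 t4 g l d) has_real_derivative La) (at d within {dL..dU}) \<and>
            ((\<lambda>l. ATTbar T Ypo \<kappa> t3 t4 g d l) has_real_derivative Lb) (at d within {dL..dU}) \<and>
            (F has_real_derivative (La + Lb)) (at d within {dL..dU}))"
  proof (intro impI)
    assume H: "PT4a M T Gs D {dL..dU} Ypo \<kappa> \<and>
      (\<forall>p\<in>{dL..dU} \<times> {dL..dU}.
         (\<lambda>(a, b). ATTbar T Ypo \<kappa> t3 t4 g a b) differentiable (at p within {dL..dU} \<times> {dL..dU}))"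
    then have PT4: "PT4a M T Gs D {dL..dU} Ypo \<kappa>" by simp
    have "(\<lambda>(a, b). ATTbar T Ypo \<kappa> t3 t4 g a b) differentiable (at (d,d) within S \<times> S)"
      using H dS unfolding S_def by blast
    from diag_deriv[OF this dS] obtain La Lb where
      La: "((\<lambda>l. ATTbar T Ypo \<kappa> t3 t4 g l d) has_real_derivative La) (at d within S)" and
      Lb: "((\<lambda>l. ATTbar T Ypo \<kappa> t3 t4 g d l) has_real_derivative Lb) (at d within S)" and
      Ld: "((\<lambda>x. ATTbar T Ypo \<kappa> t3 t4 g x x) has_real_derivative La + Lb) (at d within S)" by blast
    define K1 where "K1 = tavg t3 t4 C - tavg t1 t2 C"
    have FA: "F x = ATTbar T Ypo \<kappa> t3 t4 g x x + K1" if x: "x \<in> S" for x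
    proof -
      have "ATTbar T Ypo \<kappa> t3 t4 g x x
          = tavg t3 t4 (\<lambda>t. \<integral>\<omega>. Ypo t g x \<omega> - Y0 T Ypo t \<omega> \<partial>(\<kappa> g x))"
        unfolding ATTbar_def condE_GD_def
      proof (rule integral_tavg)
        fix t assume "t \<in> {t3..t4}"
        then have t: "t \<in> {1..T}" using times by auto
        show "integrable (\<kappa> g x) (\<lambda>\<omega>. Ypo t g x \<omega> - Y0 T Ypo t \<omega>)"
          by (rule Bochner_Integration.integrable_diff[OF intkY[OF x t] intk0[OF x t]])
      qed
      also have "\<dots> = tavg t3 t4 (\<lambda>t. p x t - (e x 1 + C t))"
      proof (rule tavg_cong)
        fix t assume "t \<in> {t3..t4}"
        then have t: "t \<in> {1..T}" using times by auto
        show "(\<integral>\<omega>. Ypo t g x \<omega> - Y0 T Ypo t \<omega> \<partial>(\<kappa> g x)) = p x t - (e x 1 + C t)"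
          using Bochner_Integration.integral_diff[OF intkY[OF x t] intk0[OF x t]]
            e_tel[OF PT4 x t] unfolding p_def e_def by simp
      qed
      also have "\<dots> = tavg t3 t4 (p x) - e x 1 - tavg t3 t4 C"
        using times by (simp add: tavg_diff tavg_add tavg_const)
      finally show ?thesis using F_e[OF PT4 x] unfolding K1_def by simp
    qed
    have "((\<lambda>x. ATTbar T Ypo \<kappa> t3 t4 g x x + K1) has_real_derivative La + Lb) (at d within S)"
      using DERIV_add[OF Ld DERIV_const[of K1]] by simp
    then have "(F has_real_derivative La + Lb) (at d within S)"
      by (rule has_field_derivative_transform_within[where d=1]) (use dS FA in auto)
    then show "\<exists>La Lb.
            ((\<lambda>l. ATTbar T Ypo \<kappa> t3 t4 g l d) has_real_derivative La) (at d within {dL..dU}) \<and>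
            ((\<lambda>l. ATTbar T Ypo \<kappa> t3 t4 g d l) has_real_derivative Lb) (at d within {dL..dU}) \<and>
            (F has_real_derivative (La + Lb)) (at d within {dL..dU})"
      using La Lb unfolding S_def by blast
  qed
  have part2: "PT5 M T Gs G D {dL..dU} Ypo \<kappa>
      \<longrightarrow> (\<exists>L.
            ((\<lambda>x. ATEbar M T G Ypo t3 t4 g x) has_real_derivative L) (at d within {dL..dU}) \<and>
            (F has_real_derivative L) (at d within {dL..dU}))"
  proof (intro impI)
    assume H: "PT5 M T Gs G D {dL..dU} Ypo \<kappa>"
    then have PT4: "PT4a M T Gs D {dL..dU} Ypo \<kappa>" unfolding PT5_def by simp
    define cG where "cG = condE_G M G g"
    define K2 where "K2 = (\<lambda>t. cG (Y0 T Ypo (t - 1)) - cG (Y0 T Ypo t) - C (t - 1))"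
    define K3 where "K3 = tavg t3 t4 K2 + tavg t1 t2 C"
    have AF: "ATEbar M T G Ypo t3 t4 g x = F x + K3" if x: "x \<in> S" for x
    proof -
      have "ATEbar M T G Ypo t3 t4 g x = tavg t3 t4 (\<lambda>t. (p x t + K2 t) - e x 1)"
        unfolding ATEbar_def
      proof (rule tavg_cong)
        fix t assume "t \<in> {t3..t4}"
        then have t: "t \<in> {1..T}" "t - 1 \<in> {1..T}" "t \<in> {2..T}" using times g2 by auto
        have xi: "x \<in> insert 0 S" using x by simp
        have iY: "integrable M (Ypo t g x)" using intM[OF t(1) g_in(1) xi] .
        have k1: "condE_GD \<kappa> g x (\<lambda>\<omega>. Ypo t g x \<omega> - Y0 T Ypo (t - 1) \<omega>)
                = condE_G M G g (\<lambda>\<omega>. Ypo t g x \<omega> - Y0 T Ypo (t - 1) \<omega>)"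
          using H g_in(1) gT t(3) x unfolding PT5_def S_def by blast
        have k2: "condE_GD \<kappa> g x (\<lambda>\<omega>. Ypo t g x \<omega> - Y0 T Ypo (t - 1) \<omega>) = p x t - e x (t - 1)"
          unfolding condE_GD_def p_def e_def
          using Bochner_Integration.integral_diff[OF intkY[OF x t(1)] intk0[OF x t(2)]] by simp
        have k3: "condE_G M G g (\<lambda>\<omega>. Ypo t g x \<omega> - Y0 T Ypo (t - 1) \<omega>)
                = cG (Ypo t g x) - cG (Y0 T Ypo (t - 1))"
          unfolding cG_def by (rule condE_G_diff[OF G_meas iY intM0[OF t(2)]])
        have k4: "condE_G M G g (\<lambda>\<omega>. Ypo t g x \<omega> - Y0 T Ypo t \<omega>)
                = cG (Ypo t g x) - cG (Y0 T Ypo t)"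
          unfolding cG_def by (rule condE_G_diff[OF G_meas iY intM0[OF t(1)]])
        have k5: "e x (t - 1) = e x 1 + C (t - 1)" using e_tel[OF PT4 x t(2)] by simp
        show "condE_G M G g (\<lambda>\<omega>. Ypo t g x \<omega> - Y0 T Ypo t \<omega>) = (p x t + K2 t) - e x 1"
          using k1 k2 k3 k4 k5 unfolding K2_def by simp
      qed
      also have "\<dots> = tavg t3 t4 (p x) + tavg t3 t4 K2 - e x 1"
        using times by (simp add: tavg_diff tavg_add tavg_const)
      finally show ?thesis using F_e[OF PT4 x] unfolding K3_def by simp
    qed
    have FP: "(F has_real_derivative Phi') (at d within S)"
      by (rule has_field_derivative_transform_within[OF Phi_deriv, where d=1]) (use dS F_Phi in auto)
    have "((\<lambda>x. F x + K3) has_real_derivative Phi') (at d within S)"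
      using DERIV_add[OF FP DERIV_const[of K3]] by simp
    then have "((\<lambda>x. ATEbar M T G Ypo t3 t4 g x) has_real_derivative Phi') (at d within S)"
      by (rule has_field_derivative_transform_within[where d=1]) (use dS AF in auto)
    then show "\<exists>L. ((\<lambda>x. ATEbar M T G Ypo t3 t4 g x) has_real_derivative L) (at d within {dL..dU}) \<and>
            (F has_real_derivative L) (at d within {dL..dU})"
      using FP unfolding S_def by blast
  qed
  show ?thesis using part1[unfolded F_def] part2[unfolded F_def] by (rule conjI)
qed

end
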